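(* There exist $5$-qubit UPBs of sizes $8$, $9$ and $10$, and there exists a $6$-qubit UPB of size $9$.
   Context: A product state in $(\mathbb{C}^2)^{\otimes p}$ is a vector $|v_1\rangle\otimes\cdots\otimes|v_p\rangle$ with each $|v_j\rangle\in\mathbb{C}^2$. A $p$-qubit unextendible product basis (UPB) is a finite set $\mathcal{S}\subseteq(\mathbb{C}^2)^{\otimes p}$ of unit product vectors that are pairwise orthogonal, such that no nonzero product vector outside $\mathcal{S}$ is orthogonal to every element of $\mathcal{S}$; its size is its number of elements. *)

theory Defs
  imports Complex_Main
begin

text \<open>The space (C^2)^{tensor p} is modelled as complex-valued functions on
  bit strings (bool lists) of length p; values on other lists are required to be 0.
  Basis index bs corresponds to the computational basis vector |bs_0 ... bs_{p-1}>.\<close>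

definition qidx :: "nat \<Rightarrow> bool list set" where
  "qidx p = {bs. length bs = p}"

definition qvec :: "nat \<Rightarrow> (bool list \<Rightarrow> complex) set" where
  "qvec p = {f. \<forall>bs. length bs \<noteq> p \<longrightarrow> f bs = 0}"

definition qinner :: "nat \<Rightarrow> (bool list \<Rightarrow> complex) \<Rightarrow> (bool list \<Rightarrow> complex) \<Rightarrow> complex" where
  "qinner p f g = (\<Sum>bs\<in>qidx p. cnj (f bs) * g bs)"

definition tensor :: "nat \<Rightarrow> (nat \<Rightarrow> bool \<Rightarrow> complex) \<Rightarrow> bool list \<Rightarrow> complex" where
  "tensor p v = (\<lambda>bs. if length bs = p then (\<Prod>j<p. v j (bs ! j)) else 0)"

definition product_vec :: "nat \<Rightarrow> (bool list \<Rightarrow> complex) \<Rightarrow> bool" where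
  "product_vec p f \<longleftrightarrow> (\<exists>v. f = tensor p v)"

definition is_UPB :: "nat \<Rightarrow> (bool list \<Rightarrow> complex) set \<Rightarrow> bool" where
  "is_UPB p S \<longleftrightarrow>
     finite S \<and>
     (\<forall>s\<in>S. product_vec p s \<and> qinner p s s = 1) \<and>
     (\<forall>s\<in>S. \<forall>t\<in>S. s \<noteq> t \<longrightarrow> qinner p s t = 0) \<and>
     (\<forall>w. product_vec p w \<and> w \<noteq> (\<lambda>_. 0) \<and> w \<notin> S \<longrightarrow> (\<exists>s\<in>S. qinner p s w \<noteq> 0))"

end

theory Submission
  imports Defs
begin


definition ip :: "(bool \<Rightarrow> complex) \<Rightarrow> (bool \<Rightarrow> complex) \<Rightarrow> complex" where
  "ip a b = cnj (a False) * b False + cnj (a True) * b True"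

lemma qidx_0: "qidx 0 = {[]}"
  by (auto simp: qidx_def)

lemma qidx_Suc: "qidx (Suc p) = (\<lambda>(b,bs). b # bs) ` (UNIV \<times> qidx p)"
  by (auto simp: qidx_def image_iff length_Suc_conv)

lemma finite_qidx: "finite (qidx p)"
proof (induction p)
  case 0 then show ?case by (simp add: qidx_0)
next
  case (Suc p) then show ?case by (simp add: qidx_Suc)
qed

lemma tensor_Cons: "length bs = p \<Longrightarrow>
  tensor (Suc p) u (b # bs) = u 0 b * tensor p (\<lambda>j. u (Suc j)) bs"
  by (simp add: tensor_def prod.lessThan_Suc_shift del: prod.lessThan_Suc)

lemma qinner_tensor:
  "qinner p (tensor p u) (tensor p v) = (\<Prod>j<p. ip (u j) (v j))"
proof (induction p arbitrary: u v)
  case 0 then show ?case by (simp add: qinner_def qidx_0 tensor_def)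
next
  case (Suc p)
  have inj: "inj_on (\<lambda>(b,bs). b # bs) (UNIV \<times> qidx p)"
    by (auto simp: inj_on_def)
  have "qinner (Suc p) (tensor (Suc p) u) (tensor (Suc p) v)
     = (\<Sum>x\<in>UNIV \<times> qidx p. cnj (tensor (Suc p) u (fst x # snd x)) * tensor (Suc p) v (fst x # snd x))"
    unfolding qinner_def qidx_Suc by (subst sum.reindex[OF inj]) (simp add: case_prod_beta)
  also have "\<dots> = (\<Sum>x\<in>UNIV \<times> qidx p. (cnj (u 0 (fst x)) * v 0 (fst x)) *
        (cnj (tensor p (\<lambda>j. u (Suc j)) (snd x)) * tensor p (\<lambda>j. v (Suc j)) (snd x)))"
    by (rule sum.cong) (auto simp: qidx_def tensor_Cons)
  also have "\<dots> = (\<Sum>b\<in>UNIV. cnj (u 0 b) * v 0 b) *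
        qinner p (tensor p (\<lambda>j. u (Suc j))) (tensor p (\<lambda>j. v (Suc j)))"
    unfolding qinner_def sum_product by (simp add: sum.cartesian_product case_prod_beta)
  also have "\<dots> = ip (u 0) (v 0) * (\<Prod>j<p. ip (u (Suc j)) (v (Suc j)))"
    using Suc.IH by (simp add: ip_def UNIV_bool add.commute)
  also have "\<dots> = (\<Prod>j<Suc p. ip (u j) (v j))"
    by (simp add: prod.lessThan_Suc_shift del: prod.lessThan_Suc)
  finally show ?case .
qed

definition cs :: "nat \<Rightarrow> real \<times> real" where
  "cs k = (if k = 0 then (1,0) else if k = 1 then (3/5,4/5) else if k = 2 then (5/13,12/13)
           else if k = 3 then (8/17,15/17) else (7/25,24/25))"

definition lab :: "nat \<times> bool \<Rightarrow> bool \<Rightarrow> complex" where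
  "lab l x = complex_of_real (if snd l then (if x then fst (cs (fst l)) else - snd (cs (fst l)))
                              else (if x then snd (cs (fst l)) else fst (cs (fst l))))"

lemma cs_norm: "(fst (cs k))^2 + (snd (cs k))^2 = 1"
  by (simp add: cs_def power2_eq_square)

lemma ip_lab_self: "ip (lab l) (lab l) = 1"
proof -
  have "ip (lab l) (lab l) = complex_of_real ((fst (cs (fst l)))^2 + (snd (cs (fst l)))^2)"
    by (simp add: ip_def lab_def power2_eq_square)
  then show ?thesis by (simp add: cs_norm)
qed

lemma ip_lab_orth: "fst l = fst l' \<Longrightarrow> snd l \<noteq> snd l' \<Longrightarrow> ip (lab l) (lab l') = 0"
  by (cases "snd l"; cases "snd l'") (auto simp: ip_def lab_def)

definition det2 :: "nat \<times> bool \<Rightarrow> nat \<times> bool \<Rightarrow> real" where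
  "det2 l l' = Re (lab l False * lab l' True - lab l True * lab l' False)"

lemma nat_lt5: "(k::nat) < 5 \<Longrightarrow> k = 0 \<or> k = 1 \<or> k = 2 \<or> k = 3 \<or> k = 4"
  by auto

lemma det2_nz: "fst l < 5 \<Longrightarrow> fst l' < 5 \<Longrightarrow> l \<noteq> l' \<Longrightarrow> det2 l l' \<noteq> 0"
  apply (cases l; cases l')
  apply (clarsimp)
  apply (drule nat_lt5)+
  apply (elim disjE; simp add: det2_def lab_def cs_def split: if_splits)
  done

lemma lab_real: "cnj (lab l x) = lab l x"
  by (simp add: lab_def)

lemma lab_Re: "lab l x = complex_of_real (Re (lab l x))"
  by (simp add: lab_def)

lemma two_orth_zero:
  assumes "fst l < 5" "fst l' < 5" "l \<noteq> l'" "ip (lab l) x = 0" "ip (lab l') x = 0"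
  shows "x = (\<lambda>_. 0)"
proof -
  let ?a0 = "lab l False" and ?a1 = "lab l True" and ?b0 = "lab l' False" and ?b1 = "lab l' True"
  have e1: "?a0 * x False + ?a1 * x True = 0" using assms(4) by (simp add: ip_def lab_real)
  have e2: "?b0 * x False + ?b1 * x True = 0" using assms(5) by (simp add: ip_def lab_real)
  have d: "?a0 * ?b1 - ?a1 * ?b0 \<noteq> 0"
  proof
    assume "?a0 * ?b1 - ?a1 * ?b0 = 0"
    then have "Re (?a0 * ?b1 - ?a1 * ?b0) = 0" by simp
    moreover have "Re (?a0 * ?b1 - ?a1 * ?b0) = det2 l l'"
      by (simp add: det2_def)
    ultimately show False using det2_nz[OF assms(1-3)] by simp
  qed
  have "(?a0 * ?b1 - ?a1 * ?b0) * x False = ?b1 * (?a0 * x False + ?a1 * x True) - ?a1 * (?b0 * x False + ?b1 * x True)"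
    by (simp add: algebra_simps)
  then have f: "x False = 0" using e1 e2 d by simp
  have "(?a0 * ?b1 - ?a1 * ?b0) * x True = ?a0 * (?b0 * x False + ?b1 * x True) - ?b0 * (?a0 * x False + ?a1 * x True)"
    by (simp add: algebra_simps)
  then have t: "x True = 0" using e1 e2 d by simp
  show ?thesis
  proof
    fix b show "x b = 0" using f t by (cases b) auto
  qed
qed


definition vecof :: "nat \<Rightarrow> (nat \<times> bool) list \<Rightarrow> bool list \<Rightarrow> complex" where
  "vecof p s = tensor p (\<lambda>j. lab (s ! j))"

definition lorth :: "(nat \<times> bool) list \<Rightarrow> (nat \<times> bool) list \<Rightarrow> bool" where
  "lorth a b = list_ex (\<lambda>xy. fst (fst xy) = fst (snd xy) \<and> snd (fst xy) \<noteq> snd (snd xy)) (zip a b)"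

lemma lorth_D: "lorth a b \<Longrightarrow> \<exists>j<length a. fst (a!j) = fst (b!j) \<and> snd (a!j) \<noteq> snd (b!j)"
proof -
  assume "lorth a b"
  then obtain x where "x \<in> set (zip a b)" "fst (fst x) = fst (snd x)" "snd (fst x) \<noteq> snd (snd x)"
    unfolding lorth_def list_ex_iff by blast
  then obtain i where "a!i = fst x" "b!i = snd x" "i < length a" "fst (fst x) = fst (snd x)" "snd (fst x) \<noteq> snd (snd x)"
    unfolding in_set_zip by blast
  then show ?thesis by metis
qed

lemma qinner_vecof: "qinner p (vecof p a) (vecof p b) = (\<Prod>j<p. ip (lab (a!j)) (lab (b!j)))"
  by (simp add: vecof_def qinner_tensor)

lemma upb_gen:
  assumes len: "\<forall>s\<in>set L. length s = p \<and> (\<forall>l\<in>set s. fst l < 5)"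
    and dist: "distinct L"
    and orth: "\<forall>a\<in>set L. \<forall>b\<in>set L. a \<noteq> b \<longrightarrow> lorth a b"
    and unext: "\<And>X. (\<And>j l l'. l \<noteq> l' \<Longrightarrow> X j l \<Longrightarrow> X j l' \<Longrightarrow> False) \<Longrightarrow>
                     (\<And>s. s \<in> set L \<Longrightarrow> \<exists>j<p. X j (s!j)) \<Longrightarrow> False"
  shows "is_UPB p (vecof p ` set L) \<and> card (vecof p ` set L) = length L"
proof -
  have self: "qinner p (vecof p a) (vecof p a) = 1" for a
    by (simp add: qinner_vecof ip_lab_self)
  have ort: "qinner p (vecof p a) (vecof p b) = 0" if "a \<in> set L" "b \<in> set L" "a \<noteq> b" for a b
  proof -
    from orth that have "lorth a b" by blast
    then obtain j where j: "j < length a" "fst (a!j) = fst (b!j)" "snd (a!j) \<noteq> snd (b!j)"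
      using lorth_D by blast
    have "j < p" using j len that by auto
    have "ip (lab (a!j)) (lab (b!j)) = 0" using j ip_lab_orth by blast
    then show ?thesis unfolding qinner_vecof
      using \<open>j < p\<close> by (intro prod_zero) auto
  qed
  have inj: "inj_on (vecof p) (set L)"
  proof (rule inj_onI, rule ccontr)
    fix a b assume ab: "a \<in> set L" "b \<in> set L" "vecof p a = vecof p b" "a \<noteq> b"
    then have "qinner p (vecof p a) (vecof p b) = 0" using ort by blast
    with ab(3) self show False by simp
  qed
  have card: "card (vecof p ` set L) = length L"
    using card_image[OF inj] distinct_card[OF dist] by simp
  have ext: "\<exists>s\<in>vecof p ` set L. qinner p s w \<noteq> 0"
    if w: "product_vec p w" "w \<noteq> (\<lambda>_. 0)" for w
  proof (rule ccontr)
    assume H: "\<not> (\<exists>s\<in>vecof p ` set L. qinner p s w \<noteq> 0)"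
    from w obtain v where v: "w = tensor p v" unfolding product_vec_def by blast
    define X where "X j l \<longleftrightarrow> j < p \<and> fst l < 5 \<and> ip (lab l) (v j) = 0" for j l
    show False
    proof (rule unext[of X])
      fix j l l' assume "l \<noteq> l'" "X j l" "X j l'"
      then have jp: "j < p" and vj: "v j = (\<lambda>_. 0)"
        using two_orth_zero[of l l' "v j"] by (auto simp: X_def)
      have "w = (\<lambda>_. 0)"
      proof
        fix bs show "w bs = 0"
        proof (cases "length bs = p")
          case True
          have "v j (bs ! j) = 0" using vj by simp
          then show ?thesis unfolding v tensor_def using jp True
            by (auto intro!: prod_zero bexI[where x=j])
        qed (simp add: v tensor_def)
      qed
      with w show False by simp
    next
      fix s assume s: "s \<in> set L"
      then have "qinner p (vecof p s) w = 0" using H by blast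
      then have "(\<Prod>j<p. ip (lab (s!j)) (v j)) = 0"
        by (simp add: v vecof_def qinner_tensor)
      then obtain j where j: "j < p" "ip (lab (s!j)) (v j) = 0" by auto
      have "fst (s!j) < 5" using len s j(1) by (auto dest: nth_mem)
      then show "\<exists>j<p. X j (s!j)" using j X_def by blast
    qed
  qed
  have "is_UPB p (vecof p ` set L)"
    unfolding is_UPB_def using self ort ext by (auto simp: product_vec_def vecof_def)
  with card show ?thesis by simp
qed


lemma ex_lt5: "(\<exists>j<(5::nat). P j) \<longleftrightarrow> P 0 \<or> P 1 \<or> P 2 \<or> P 3 \<or> P 4"
  by (auto simp: less_Suc_eq numeral_eq_Suc)

lemma ex_lt6: "(\<exists>j<(6::nat). P j) \<longleftrightarrow> P 0 \<or> P 1 \<or> P 2 \<or> P 3 \<or> P 4 \<or> P 5"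
  by (auto simp: less_Suc_eq numeral_eq_Suc)

definition Lex58 :: "(nat \<times> bool) list list" where
  "Lex58 = [[(1,True),(1,True),(1,True),(1,False),(0,False)],[(2,False),(1,False),(2,False),(0,True),(2,False)],[(2,True),(0,False),(0,False),(2,True),(0,True)],[(2,True),(1,False),(2,False),(2,False),(2,False)],[(1,False),(2,True),(0,True),(1,False),(2,True)],[(1,True),(0,True),(2,True),(1,True),(1,False)],[(2,False),(2,False),(1,False),(0,False),(1,True)],[(1,False),(1,True),(1,True),(1,True),(0,False)]]"

lemma ex58: "\<exists>S. is_UPB 5 S \<and> card S = 8"
proof -
  have "is_UPB 5 (vecof 5 ` set Lex58) \<and> card (vecof 5 ` set Lex58) = length Lex58"
  proof (rule upb_gen)
    show "\<forall>s\<in>set Lex58. length s = 5 \<and> (\<forall>l\<in>set s. fst l < 5)" by (simp add: Lex58_def)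
    show "distinct Lex58" by (simp add: Lex58_def)
    show "\<forall>a\<in>set Lex58. \<forall>b\<in>set Lex58. a \<noteq> b \<longrightarrow> lorth a b" by (simp add: lorth_def Lex58_def)
  next
    fix X assume h1: "\<And>j l l'. l \<noteq> l' \<Longrightarrow> X j l \<Longrightarrow> X j l' \<Longrightarrow> False"
      and h2: "\<And>s. s \<in> set Lex58 \<Longrightarrow> \<exists>j<5. X j (s!j)"
    have c0: "X 0 (1,True) \<or> X 1 (1,True) \<or> X 2 (1,True) \<or> X 3 (1,False) \<or> X 4 (0,False)" using h2[of "[(1,True),(1,True),(1,True),(1,False),(0,False)]"] by (simp add: ex_lt5 Lex58_def)
    have c1: "X 0 (2,False) \<or> X 1 (1,False) \<or> X 2 (2,False) \<or> X 3 (0,True) \<or> X 4 (2,False)" using h2[of "[(2,False),(1,False),(2,False),(0,True),(2,False)]"] by (simp add: ex_lt5 Lex58_def)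
    have c2: "X 0 (2,True) \<or> X 1 (0,False) \<or> X 2 (0,False) \<or> X 3 (2,True) \<or> X 4 (0,True)" using h2[of "[(2,True),(0,False),(0,False),(2,True),(0,True)]"] by (simp add: ex_lt5 Lex58_def)
    have c3: "X 0 (2,True) \<or> X 1 (1,False) \<or> X 2 (2,False) \<or> X 3 (2,False) \<or> X 4 (2,False)" using h2[of "[(2,True),(1,False),(2,False),(2,False),(2,False)]"] by (simp add: ex_lt5 Lex58_def)
    have c4: "X 0 (1,False) \<or> X 1 (2,True) \<or> X 2 (0,True) \<or> X 3 (1,False) \<or> X 4 (2,True)" using h2[of "[(1,False),(2,True),(0,True),(1,False),(2,True)]"] by (simp add: ex_lt5 Lex58_def)
    have c5: "X 0 (1,True) \<or> X 1 (0,True) \<or> X 2 (2,True) \<or> X 3 (1,True) \<or> X 4 (1,False)" using h2[of "[(1,True),(0,True),(2,True),(1,True),(1,False)]"] by (simp add: ex_lt5 Lex58_def)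
    have c6: "X 0 (2,False) \<or> X 1 (2,False) \<or> X 2 (1,False) \<or> X 3 (0,False) \<or> X 4 (1,True)" using h2[of "[(2,False),(2,False),(1,False),(0,False),(1,True)]"] by (simp add: ex_lt5 Lex58_def)
    have c7: "X 0 (1,False) \<or> X 1 (1,True) \<or> X 2 (1,True) \<or> X 3 (1,True) \<or> X 4 (0,False)" using h2[of "[(1,False),(1,True),(1,True),(1,True),(0,False)]"] by (simp add: ex_lt5 Lex58_def)
    have e0: "\<not> X 0 (1,False) \<or> \<not> X 0 (1,True)" using h1[of "(1,False)" "(1,True)" 0] by auto
    have e1: "\<not> X 0 (1,False) \<or> \<not> X 0 (2,False)" using h1[of "(1,False)" "(2,False)" 0] by auto
    have e2: "\<not> X 0 (1,False) \<or> \<not> X 0 (2,True)" using h1[of "(1,False)" "(2,True)" 0] by auto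
    have e3: "\<not> X 0 (1,True) \<or> \<not> X 0 (2,False)" using h1[of "(1,True)" "(2,False)" 0] by auto
    have e4: "\<not> X 0 (1,True) \<or> \<not> X 0 (2,True)" using h1[of "(1,True)" "(2,True)" 0] by auto
    have e5: "\<not> X 0 (2,False) \<or> \<not> X 0 (2,True)" using h1[of "(2,False)" "(2,True)" 0] by auto
    have e6: "\<not> X 1 (0,False) \<or> \<not> X 1 (0,True)" using h1[of "(0,False)" "(0,True)" 1] by auto
    have e7: "\<not> X 1 (0,False) \<or> \<not> X 1 (1,False)" using h1[of "(0,False)" "(1,False)" 1] by auto
    have e8: "\<not> X 1 (0,False) \<or> \<not> X 1 (1,True)" using h1[of "(0,False)" "(1,True)" 1] by auto
    have e9: "\<not> X 1 (0,False) \<or> \<not> X 1 (2,False)" using h1[of "(0,False)" "(2,False)" 1] by auto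
    have e10: "\<not> X 1 (0,False) \<or> \<not> X 1 (2,True)" using h1[of "(0,False)" "(2,True)" 1] by auto
    have e11: "\<not> X 1 (0,True) \<or> \<not> X 1 (1,False)" using h1[of "(0,True)" "(1,False)" 1] by auto
    have e12: "\<not> X 1 (0,True) \<or> \<not> X 1 (1,True)" using h1[of "(0,True)" "(1,True)" 1] by auto
    have e13: "\<not> X 1 (0,True) \<or> \<not> X 1 (2,False)" using h1[of "(0,True)" "(2,False)" 1] by auto
    have e14: "\<not> X 1 (0,True) \<or> \<not> X 1 (2,True)" using h1[of "(0,True)" "(2,True)" 1] by auto
    have e15: "\<not> X 1 (1,False) \<or> \<not> X 1 (1,True)" using h1[of "(1,False)" "(1,True)" 1] by auto
    have e16: "\<not> X 1 (1,False) \<or> \<not> X 1 (2,False)" using h1[of "(1,False)" "(2,False)" 1] by auto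
    have e17: "\<not> X 1 (1,False) \<or> \<not> X 1 (2,True)" using h1[of "(1,False)" "(2,True)" 1] by auto
    have e18: "\<not> X 1 (1,True) \<or> \<not> X 1 (2,False)" using h1[of "(1,True)" "(2,False)" 1] by auto
    have e19: "\<not> X 1 (1,True) \<or> \<not> X 1 (2,True)" using h1[of "(1,True)" "(2,True)" 1] by auto
    have e20: "\<not> X 1 (2,False) \<or> \<not> X 1 (2,True)" using h1[of "(2,False)" "(2,True)" 1] by auto
    have e21: "\<not> X 2 (0,False) \<or> \<not> X 2 (0,True)" using h1[of "(0,False)" "(0,True)" 2] by auto
    have e22: "\<not> X 2 (0,False) \<or> \<not> X 2 (1,False)" using h1[of "(0,False)" "(1,False)" 2] by auto
    have e23: "\<not> X 2 (0,False) \<or> \<not> X 2 (1,True)" using h1[of "(0,False)" "(1,True)" 2] by auto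
    have e24: "\<not> X 2 (0,False) \<or> \<not> X 2 (2,False)" using h1[of "(0,False)" "(2,False)" 2] by auto
    have e25: "\<not> X 2 (0,False) \<or> \<not> X 2 (2,True)" using h1[of "(0,False)" "(2,True)" 2] by auto
    have e26: "\<not> X 2 (0,True) \<or> \<not> X 2 (1,False)" using h1[of "(0,True)" "(1,False)" 2] by auto
    have e27: "\<not> X 2 (0,True) \<or> \<not> X 2 (1,True)" using h1[of "(0,True)" "(1,True)" 2] by auto
    have e28: "\<not> X 2 (0,True) \<or> \<not> X 2 (2,False)" using h1[of "(0,True)" "(2,False)" 2] by auto
    have e29: "\<not> X 2 (0,True) \<or> \<not> X 2 (2,True)" using h1[of "(0,True)" "(2,True)" 2] by auto
    have e30: "\<not> X 2 (1,False) \<or> \<not> X 2 (1,True)" using h1[of "(1,False)" "(1,True)" 2] by auto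
    have e31: "\<not> X 2 (1,False) \<or> \<not> X 2 (2,False)" using h1[of "(1,False)" "(2,False)" 2] by auto
    have e32: "\<not> X 2 (1,False) \<or> \<not> X 2 (2,True)" using h1[of "(1,False)" "(2,True)" 2] by auto
    have e33: "\<not> X 2 (1,True) \<or> \<not> X 2 (2,False)" using h1[of "(1,True)" "(2,False)" 2] by auto
    have e34: "\<not> X 2 (1,True) \<or> \<not> X 2 (2,True)" using h1[of "(1,True)" "(2,True)" 2] by auto
    have e35: "\<not> X 2 (2,False) \<or> \<not> X 2 (2,True)" using h1[of "(2,False)" "(2,True)" 2] by auto
    have e36: "\<not> X 3 (0,False) \<or> \<not> X 3 (0,True)" using h1[of "(0,False)" "(0,True)" 3] by auto
    have e37: "\<not> X 3 (0,False) \<or> \<not> X 3 (1,False)" using h1[of "(0,False)" "(1,False)" 3] by auto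
    have e38: "\<not> X 3 (0,False) \<or> \<not> X 3 (1,True)" using h1[of "(0,False)" "(1,True)" 3] by auto
    have e39: "\<not> X 3 (0,False) \<or> \<not> X 3 (2,False)" using h1[of "(0,False)" "(2,False)" 3] by auto
    have e40: "\<not> X 3 (0,False) \<or> \<not> X 3 (2,True)" using h1[of "(0,False)" "(2,True)" 3] by auto
    have e41: "\<not> X 3 (0,True) \<or> \<not> X 3 (1,False)" using h1[of "(0,True)" "(1,False)" 3] by auto
    have e42: "\<not> X 3 (0,True) \<or> \<not> X 3 (1,True)" using h1[of "(0,True)" "(1,True)" 3] by auto
    have e43: "\<not> X 3 (0,True) \<or> \<not> X 3 (2,False)" using h1[of "(0,True)" "(2,False)" 3] by auto
    have e44: "\<not> X 3 (0,True) \<or> \<not> X 3 (2,True)" using h1[of "(0,True)" "(2,True)" 3] by auto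
    have e45: "\<not> X 3 (1,False) \<or> \<not> X 3 (1,True)" using h1[of "(1,False)" "(1,True)" 3] by auto
    have e46: "\<not> X 3 (1,False) \<or> \<not> X 3 (2,False)" using h1[of "(1,False)" "(2,False)" 3] by auto
    have e47: "\<not> X 3 (1,False) \<or> \<not> X 3 (2,True)" using h1[of "(1,False)" "(2,True)" 3] by auto
    have e48: "\<not> X 3 (1,True) \<or> \<not> X 3 (2,False)" using h1[of "(1,True)" "(2,False)" 3] by auto
    have e49: "\<not> X 3 (1,True) \<or> \<not> X 3 (2,True)" using h1[of "(1,True)" "(2,True)" 3] by auto
    have e50: "\<not> X 3 (2,False) \<or> \<not> X 3 (2,True)" using h1[of "(2,False)" "(2,True)" 3] by auto
    have e51: "\<not> X 4 (0,False) \<or> \<not> X 4 (0,True)" using h1[of "(0,False)" "(0,True)" 4] by auto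
    have e52: "\<not> X 4 (0,False) \<or> \<not> X 4 (1,False)" using h1[of "(0,False)" "(1,False)" 4] by auto
    have e53: "\<not> X 4 (0,False) \<or> \<not> X 4 (1,True)" using h1[of "(0,False)" "(1,True)" 4] by auto
    have e54: "\<not> X 4 (0,False) \<or> \<not> X 4 (2,False)" using h1[of "(0,False)" "(2,False)" 4] by auto
    have e55: "\<not> X 4 (0,False) \<or> \<not> X 4 (2,True)" using h1[of "(0,False)" "(2,True)" 4] by auto
    have e56: "\<not> X 4 (0,True) \<or> \<not> X 4 (1,False)" using h1[of "(0,True)" "(1,False)" 4] by auto
    have e57: "\<not> X 4 (0,True) \<or> \<not> X 4 (1,True)" using h1[of "(0,True)" "(1,True)" 4] by auto
    have e58: "\<not> X 4 (0,True) \<or> \<not> X 4 (2,False)" using h1[of "(0,True)" "(2,False)" 4] by auto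
    have e59: "\<not> X 4 (0,True) \<or> \<not> X 4 (2,True)" using h1[of "(0,True)" "(2,True)" 4] by auto
    have e60: "\<not> X 4 (1,False) \<or> \<not> X 4 (1,True)" using h1[of "(1,False)" "(1,True)" 4] by auto
    have e61: "\<not> X 4 (1,False) \<or> \<not> X 4 (2,False)" using h1[of "(1,False)" "(2,False)" 4] by auto
    have e62: "\<not> X 4 (1,False) \<or> \<not> X 4 (2,True)" using h1[of "(1,False)" "(2,True)" 4] by auto
    have e63: "\<not> X 4 (1,True) \<or> \<not> X 4 (2,False)" using h1[of "(1,True)" "(2,False)" 4] by auto
    have e64: "\<not> X 4 (1,True) \<or> \<not> X 4 (2,True)" using h1[of "(1,True)" "(2,True)" 4] by auto
    have e65: "\<not> X 4 (2,False) \<or> \<not> X 4 (2,True)" using h1[of "(2,False)" "(2,True)" 4] by auto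
    show False using c0 c1 c2 c3 c4 c5 c6 c7 e0 e1 e2 e3 e4 e5 e6 e7 e8 e9 e10 e11 e12 e13 e14 e15 e16 e17 e18 e19 e20 e21 e22 e23 e24 e25 e26 e27 e28 e29 e30 e31 e32 e33 e34 e35 e36 e37 e38 e39 e40 e41 e42 e43 e44 e45 e46 e47 e48 e49 e50 e51 e52 e53 e54 e55 e56 e57 e58 e59 e60 e61 e62 e63 e64 e65 by sat
  qed
  then show ?thesis by (intro exI[of _ "vecof 5 ` set Lex58"]) (simp add: Lex58_def)
qed

definition Lex59 :: "(nat \<times> bool) list list" where
  "Lex59 = [[(2,False),(2,False),(2,False),(3,True),(3,False)],[(3,False),(2,True),(1,True),(3,True),(0,False)],[(3,True),(2,True),(1,False),(1,False),(1,False)],[(3,True),(3,True),(3,False),(1,True),(3,True)],[(0,False),(0,False),(3,True),(3,False),(1,True)],[(3,True),(0,True),(1,True),(1,False),(3,True)],[(2,True),(2,False),(3,False),(1,False),(3,False)],[(3,False),(0,True),(1,False),(1,False),(3,True)],[(0,True),(3,False),(2,True),(1,True),(0,True)]]"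

lemma ex59: "\<exists>S. is_UPB 5 S \<and> card S = 9"
proof -
  have "is_UPB 5 (vecof 5 ` set Lex59) \<and> card (vecof 5 ` set Lex59) = length Lex59"
  proof (rule upb_gen)
    show "\<forall>s\<in>set Lex59. length s = 5 \<and> (\<forall>l\<in>set s. fst l < 5)" by (simp add: Lex59_def)
    show "distinct Lex59" by (simp add: Lex59_def)
    show "\<forall>a\<in>set Lex59. \<forall>b\<in>set Lex59. a \<noteq> b \<longrightarrow> lorth a b" by (simp add: lorth_def Lex59_def)
  next
    fix X assume h1: "\<And>j l l'. l \<noteq> l' \<Longrightarrow> X j l \<Longrightarrow> X j l' \<Longrightarrow> False"
      and h2: "\<And>s. s \<in> set Lex59 \<Longrightarrow> \<exists>j<5. X j (s!j)"
    have c0: "X 0 (2,False) \<or> X 1 (2,False) \<or> X 2 (2,False) \<or> X 3 (3,True) \<or> X 4 (3,False)" using h2[of "[(2,False),(2,False),(2,False),(3,True),(3,False)]"] by (simp add: ex_lt5 Lex59_def)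
    have c1: "X 0 (3,False) \<or> X 1 (2,True) \<or> X 2 (1,True) \<or> X 3 (3,True) \<or> X 4 (0,False)" using h2[of "[(3,False),(2,True),(1,True),(3,True),(0,False)]"] by (simp add: ex_lt5 Lex59_def)
    have c2: "X 0 (3,True) \<or> X 1 (2,True) \<or> X 2 (1,False) \<or> X 3 (1,False) \<or> X 4 (1,False)" using h2[of "[(3,True),(2,True),(1,False),(1,False),(1,False)]"] by (simp add: ex_lt5 Lex59_def)
    have c3: "X 0 (3,True) \<or> X 1 (3,True) \<or> X 2 (3,False) \<or> X 3 (1,True) \<or> X 4 (3,True)" using h2[of "[(3,True),(3,True),(3,False),(1,True),(3,True)]"] by (simp add: ex_lt5 Lex59_def)
    have c4: "X 0 (0,False) \<or> X 1 (0,False) \<or> X 2 (3,True) \<or> X 3 (3,False) \<or> X 4 (1,True)" using h2[of "[(0,False),(0,False),(3,True),(3,False),(1,True)]"] by (simp add: ex_lt5 Lex59_def)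
    have c5: "X 0 (3,True) \<or> X 1 (0,True) \<or> X 2 (1,True) \<or> X 3 (1,False) \<or> X 4 (3,True)" using h2[of "[(3,True),(0,True),(1,True),(1,False),(3,True)]"] by (simp add: ex_lt5 Lex59_def)
    have c6: "X 0 (2,True) \<or> X 1 (2,False) \<or> X 2 (3,False) \<or> X 3 (1,False) \<or> X 4 (3,False)" using h2[of "[(2,True),(2,False),(3,False),(1,False),(3,False)]"] by (simp add: ex_lt5 Lex59_def)
    have c7: "X 0 (3,False) \<or> X 1 (0,True) \<or> X 2 (1,False) \<or> X 3 (1,False) \<or> X 4 (3,True)" using h2[of "[(3,False),(0,True),(1,False),(1,False),(3,True)]"] by (simp add: ex_lt5 Lex59_def)
    have c8: "X 0 (0,True) \<or> X 1 (3,False) \<or> X 2 (2,True) \<or> X 3 (1,True) \<or> X 4 (0,True)" using h2[of "[(0,True),(3,False),(2,True),(1,True),(0,True)]"] by (simp add: ex_lt5 Lex59_def)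
    have e0: "\<not> X 0 (0,False) \<or> \<not> X 0 (0,True)" using h1[of "(0,False)" "(0,True)" 0] by auto
    have e1: "\<not> X 0 (0,False) \<or> \<not> X 0 (2,False)" using h1[of "(0,False)" "(2,False)" 0] by auto
    have e2: "\<not> X 0 (0,False) \<or> \<not> X 0 (2,True)" using h1[of "(0,False)" "(2,True)" 0] by auto
    have e3: "\<not> X 0 (0,False) \<or> \<not> X 0 (3,False)" using h1[of "(0,False)" "(3,False)" 0] by auto
    have e4: "\<not> X 0 (0,False) \<or> \<not> X 0 (3,True)" using h1[of "(0,False)" "(3,True)" 0] by auto
    have e5: "\<not> X 0 (0,True) \<or> \<not> X 0 (2,False)" using h1[of "(0,True)" "(2,False)" 0] by auto
    have e6: "\<not> X 0 (0,True) \<or> \<not> X 0 (2,True)" using h1[of "(0,True)" "(2,True)" 0] by auto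
    have e7: "\<not> X 0 (0,True) \<or> \<not> X 0 (3,False)" using h1[of "(0,True)" "(3,False)" 0] by auto
    have e8: "\<not> X 0 (0,True) \<or> \<not> X 0 (3,True)" using h1[of "(0,True)" "(3,True)" 0] by auto
    have e9: "\<not> X 0 (2,False) \<or> \<not> X 0 (2,True)" using h1[of "(2,False)" "(2,True)" 0] by auto
    have e10: "\<not> X 0 (2,False) \<or> \<not> X 0 (3,False)" using h1[of "(2,False)" "(3,False)" 0] by auto
    have e11: "\<not> X 0 (2,False) \<or> \<not> X 0 (3,True)" using h1[of "(2,False)" "(3,True)" 0] by auto
    have e12: "\<not> X 0 (2,True) \<or> \<not> X 0 (3,False)" using h1[of "(2,True)" "(3,False)" 0] by auto
    have e13: "\<not> X 0 (2,True) \<or> \<not> X 0 (3,True)" using h1[of "(2,True)" "(3,True)" 0] by auto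
    have e14: "\<not> X 0 (3,False) \<or> \<not> X 0 (3,True)" using h1[of "(3,False)" "(3,True)" 0] by auto
    have e15: "\<not> X 1 (0,False) \<or> \<not> X 1 (0,True)" using h1[of "(0,False)" "(0,True)" 1] by auto
    have e16: "\<not> X 1 (0,False) \<or> \<not> X 1 (2,False)" using h1[of "(0,False)" "(2,False)" 1] by auto
    have e17: "\<not> X 1 (0,False) \<or> \<not> X 1 (2,True)" using h1[of "(0,False)" "(2,True)" 1] by auto
    have e18: "\<not> X 1 (0,False) \<or> \<not> X 1 (3,False)" using h1[of "(0,False)" "(3,False)" 1] by auto
    have e19: "\<not> X 1 (0,False) \<or> \<not> X 1 (3,True)" using h1[of "(0,False)" "(3,True)" 1] by auto
    have e20: "\<not> X 1 (0,True) \<or> \<not> X 1 (2,False)" using h1[of "(0,True)" "(2,False)" 1] by auto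
    have e21: "\<not> X 1 (0,True) \<or> \<not> X 1 (2,True)" using h1[of "(0,True)" "(2,True)" 1] by auto
    have e22: "\<not> X 1 (0,True) \<or> \<not> X 1 (3,False)" using h1[of "(0,True)" "(3,False)" 1] by auto
    have e23: "\<not> X 1 (0,True) \<or> \<not> X 1 (3,True)" using h1[of "(0,True)" "(3,True)" 1] by auto
    have e24: "\<not> X 1 (2,False) \<or> \<not> X 1 (2,True)" using h1[of "(2,False)" "(2,True)" 1] by auto
    have e25: "\<not> X 1 (2,False) \<or> \<not> X 1 (3,False)" using h1[of "(2,False)" "(3,False)" 1] by auto
    have e26: "\<not> X 1 (2,False) \<or> \<not> X 1 (3,True)" using h1[of "(2,False)" "(3,True)" 1] by auto
    have e27: "\<not> X 1 (2,True) \<or> \<not> X 1 (3,False)" using h1[of "(2,True)" "(3,False)" 1] by auto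
    have e28: "\<not> X 1 (2,True) \<or> \<not> X 1 (3,True)" using h1[of "(2,True)" "(3,True)" 1] by auto
    have e29: "\<not> X 1 (3,False) \<or> \<not> X 1 (3,True)" using h1[of "(3,False)" "(3,True)" 1] by auto
    have e30: "\<not> X 2 (1,False) \<or> \<not> X 2 (1,True)" using h1[of "(1,False)" "(1,True)" 2] by auto
    have e31: "\<not> X 2 (1,False) \<or> \<not> X 2 (2,False)" using h1[of "(1,False)" "(2,False)" 2] by auto
    have e32: "\<not> X 2 (1,False) \<or> \<not> X 2 (2,True)" using h1[of "(1,False)" "(2,True)" 2] by auto
    have e33: "\<not> X 2 (1,False) \<or> \<not> X 2 (3,False)" using h1[of "(1,False)" "(3,False)" 2] by auto
    have e34: "\<not> X 2 (1,False) \<or> \<not> X 2 (3,True)" using h1[of "(1,False)" "(3,True)" 2] by auto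
    have e35: "\<not> X 2 (1,True) \<or> \<not> X 2 (2,False)" using h1[of "(1,True)" "(2,False)" 2] by auto
    have e36: "\<not> X 2 (1,True) \<or> \<not> X 2 (2,True)" using h1[of "(1,True)" "(2,True)" 2] by auto
    have e37: "\<not> X 2 (1,True) \<or> \<not> X 2 (3,False)" using h1[of "(1,True)" "(3,False)" 2] by auto
    have e38: "\<not> X 2 (1,True) \<or> \<not> X 2 (3,True)" using h1[of "(1,True)" "(3,True)" 2] by auto
    have e39: "\<not> X 2 (2,False) \<or> \<not> X 2 (2,True)" using h1[of "(2,False)" "(2,True)" 2] by auto
    have e40: "\<not> X 2 (2,False) \<or> \<not> X 2 (3,False)" using h1[of "(2,False)" "(3,False)" 2] by auto
    have e41: "\<not> X 2 (2,False) \<or> \<not> X 2 (3,True)" using h1[of "(2,False)" "(3,True)" 2] by auto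
    have e42: "\<not> X 2 (2,True) \<or> \<not> X 2 (3,False)" using h1[of "(2,True)" "(3,False)" 2] by auto
    have e43: "\<not> X 2 (2,True) \<or> \<not> X 2 (3,True)" using h1[of "(2,True)" "(3,True)" 2] by auto
    have e44: "\<not> X 2 (3,False) \<or> \<not> X 2 (3,True)" using h1[of "(3,False)" "(3,True)" 2] by auto
    have e45: "\<not> X 3 (1,False) \<or> \<not> X 3 (1,True)" using h1[of "(1,False)" "(1,True)" 3] by auto
    have e46: "\<not> X 3 (1,False) \<or> \<not> X 3 (3,False)" using h1[of "(1,False)" "(3,False)" 3] by auto
    have e47: "\<not> X 3 (1,False) \<or> \<not> X 3 (3,True)" using h1[of "(1,False)" "(3,True)" 3] by auto
    have e48: "\<not> X 3 (1,True) \<or> \<not> X 3 (3,False)" using h1[of "(1,True)" "(3,False)" 3] by auto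
    have e49: "\<not> X 3 (1,True) \<or> \<not> X 3 (3,True)" using h1[of "(1,True)" "(3,True)" 3] by auto
    have e50: "\<not> X 3 (3,False) \<or> \<not> X 3 (3,True)" using h1[of "(3,False)" "(3,True)" 3] by auto
    have e51: "\<not> X 4 (0,False) \<or> \<not> X 4 (0,True)" using h1[of "(0,False)" "(0,True)" 4] by auto
    have e52: "\<not> X 4 (0,False) \<or> \<not> X 4 (1,False)" using h1[of "(0,False)" "(1,False)" 4] by auto
    have e53: "\<not> X 4 (0,False) \<or> \<not> X 4 (1,True)" using h1[of "(0,False)" "(1,True)" 4] by auto
    have e54: "\<not> X 4 (0,False) \<or> \<not> X 4 (3,False)" using h1[of "(0,False)" "(3,False)" 4] by auto
    have e55: "\<not> X 4 (0,False) \<or> \<not> X 4 (3,True)" using h1[of "(0,False)" "(3,True)" 4] by auto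
    have e56: "\<not> X 4 (0,True) \<or> \<not> X 4 (1,False)" using h1[of "(0,True)" "(1,False)" 4] by auto
    have e57: "\<not> X 4 (0,True) \<or> \<not> X 4 (1,True)" using h1[of "(0,True)" "(1,True)" 4] by auto
    have e58: "\<not> X 4 (0,True) \<or> \<not> X 4 (3,False)" using h1[of "(0,True)" "(3,False)" 4] by auto
    have e59: "\<not> X 4 (0,True) \<or> \<not> X 4 (3,True)" using h1[of "(0,True)" "(3,True)" 4] by auto
    have e60: "\<not> X 4 (1,False) \<or> \<not> X 4 (1,True)" using h1[of "(1,False)" "(1,True)" 4] by auto
    have e61: "\<not> X 4 (1,False) \<or> \<not> X 4 (3,False)" using h1[of "(1,False)" "(3,False)" 4] by auto
    have e62: "\<not> X 4 (1,False) \<or> \<not> X 4 (3,True)" using h1[of "(1,False)" "(3,True)" 4] by auto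
    have e63: "\<not> X 4 (1,True) \<or> \<not> X 4 (3,False)" using h1[of "(1,True)" "(3,False)" 4] by auto
    have e64: "\<not> X 4 (1,True) \<or> \<not> X 4 (3,True)" using h1[of "(1,True)" "(3,True)" 4] by auto
    have e65: "\<not> X 4 (3,False) \<or> \<not> X 4 (3,True)" using h1[of "(3,False)" "(3,True)" 4] by auto
    show False using c0 c1 c2 c3 c4 c5 c6 c7 c8 e0 e1 e2 e3 e4 e5 e6 e7 e8 e9 e10 e11 e12 e13 e14 e15 e16 e17 e18 e19 e20 e21 e22 e23 e24 e25 e26 e27 e28 e29 e30 e31 e32 e33 e34 e35 e36 e37 e38 e39 e40 e41 e42 e43 e44 e45 e46 e47 e48 e49 e50 e51 e52 e53 e54 e55 e56 e57 e58 e59 e60 e61 e62 e63 e64 e65 by sat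
  qed
  then show ?thesis by (intro exI[of _ "vecof 5 ` set Lex59"]) (simp add: Lex59_def)
qed


definition Lex510 :: "(nat \<times> bool) list list" where
  "Lex510 = [[(2,False),(0,True),(1,False),(1,False),(3,True)],[(2,True),(2,True),(2,False),(1,False),(3,True)],[(2,True),(3,False),(2,True),(1,True),(1,True)],[(3,True),(3,False),(0,True),(1,False),(3,False)],[(2,True),(3,True),(2,True),(2,True),(2,True)],[(3,False),(2,False),(1,True),(2,False),(1,False)],[(3,True),(0,True),(2,False),(1,True),(2,True)],[(2,False),(2,True),(2,True),(1,True),(0,True)],[(2,False),(0,False),(0,False),(2,True),(0,False)],[(2,True),(3,True),(1,False),(1,True),(2,False)]]"

lemma ex510: "\<exists>S. is_UPB 5 S \<and> card S = 10"
proof -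
  have "is_UPB 5 (vecof 5 ` set Lex510) \<and> card (vecof 5 ` set Lex510) = length Lex510"
  proof (rule upb_gen)
    show "\<forall>s\<in>set Lex510. length s = 5 \<and> (\<forall>l\<in>set s. fst l < 5)" by (simp add: Lex510_def)
    show "distinct Lex510" by (simp add: Lex510_def)
    show "\<forall>a\<in>set Lex510. \<forall>b\<in>set Lex510. a \<noteq> b \<longrightarrow> lorth a b" by (simp add: lorth_def Lex510_def)
  next
    fix X assume h1: "\<And>j l l'. l \<noteq> l' \<Longrightarrow> X j l \<Longrightarrow> X j l' \<Longrightarrow> False"
      and h2: "\<And>s. s \<in> set Lex510 \<Longrightarrow> \<exists>j<5. X j (s!j)"
    have c0: "X 0 (2,False) \<or> X 1 (0,True) \<or> X 2 (1,False) \<or> X 3 (1,False) \<or> X 4 (3,True)" using h2[of "[(2,False),(0,True),(1,False),(1,False),(3,True)]"] by (simp add: ex_lt5 Lex510_def)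
    have c1: "X 0 (2,True) \<or> X 1 (2,True) \<or> X 2 (2,False) \<or> X 3 (1,False) \<or> X 4 (3,True)" using h2[of "[(2,True),(2,True),(2,False),(1,False),(3,True)]"] by (simp add: ex_lt5 Lex510_def)
    have c2: "X 0 (2,True) \<or> X 1 (3,False) \<or> X 2 (2,True) \<or> X 3 (1,True) \<or> X 4 (1,True)" using h2[of "[(2,True),(3,False),(2,True),(1,True),(1,True)]"] by (simp add: ex_lt5 Lex510_def)
    have c3: "X 0 (3,True) \<or> X 1 (3,False) \<or> X 2 (0,True) \<or> X 3 (1,False) \<or> X 4 (3,False)" using h2[of "[(3,True),(3,False),(0,True),(1,False),(3,False)]"] by (simp add: ex_lt5 Lex510_def)
    have c4: "X 0 (2,True) \<or> X 1 (3,True) \<or> X 2 (2,True) \<or> X 3 (2,True) \<or> X 4 (2,True)" using h2[of "[(2,True),(3,True),(2,True),(2,True),(2,True)]"] by (simp add: ex_lt5 Lex510_def)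
    have c5: "X 0 (3,False) \<or> X 1 (2,False) \<or> X 2 (1,True) \<or> X 3 (2,False) \<or> X 4 (1,False)" using h2[of "[(3,False),(2,False),(1,True),(2,False),(1,False)]"] by (simp add: ex_lt5 Lex510_def)
    have c6: "X 0 (3,True) \<or> X 1 (0,True) \<or> X 2 (2,False) \<or> X 3 (1,True) \<or> X 4 (2,True)" using h2[of "[(3,True),(0,True),(2,False),(1,True),(2,True)]"] by (simp add: ex_lt5 Lex510_def)
    have c7: "X 0 (2,False) \<or> X 1 (2,True) \<or> X 2 (2,True) \<or> X 3 (1,True) \<or> X 4 (0,True)" using h2[of "[(2,False),(2,True),(2,True),(1,True),(0,True)]"] by (simp add: ex_lt5 Lex510_def)
    have c8: "X 0 (2,False) \<or> X 1 (0,False) \<or> X 2 (0,False) \<or> X 3 (2,True) \<or> X 4 (0,False)" using h2[of "[(2,False),(0,False),(0,False),(2,True),(0,False)]"] by (simp add: ex_lt5 Lex510_def)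
    have c9: "X 0 (2,True) \<or> X 1 (3,True) \<or> X 2 (1,False) \<or> X 3 (1,True) \<or> X 4 (2,False)" using h2[of "[(2,True),(3,True),(1,False),(1,True),(2,False)]"] by (simp add: ex_lt5 Lex510_def)
    have e0: "\<not> X 0 (2,False) \<or> \<not> X 0 (2,True)" using h1[of "(2,False)" "(2,True)" 0] by auto
    have e1: "\<not> X 0 (2,False) \<or> \<not> X 0 (3,False)" using h1[of "(2,False)" "(3,False)" 0] by auto
    have e2: "\<not> X 0 (2,False) \<or> \<not> X 0 (3,True)" using h1[of "(2,False)" "(3,True)" 0] by auto
    have e3: "\<not> X 0 (2,True) \<or> \<not> X 0 (3,False)" using h1[of "(2,True)" "(3,False)" 0] by auto
    have e4: "\<not> X 0 (2,True) \<or> \<not> X 0 (3,True)" using h1[of "(2,True)" "(3,True)" 0] by auto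
    have e5: "\<not> X 0 (3,False) \<or> \<not> X 0 (3,True)" using h1[of "(3,False)" "(3,True)" 0] by auto
    have e6: "\<not> X 1 (0,False) \<or> \<not> X 1 (0,True)" using h1[of "(0,False)" "(0,True)" 1] by auto
    have e7: "\<not> X 1 (0,False) \<or> \<not> X 1 (2,False)" using h1[of "(0,False)" "(2,False)" 1] by auto
    have e8: "\<not> X 1 (0,False) \<or> \<not> X 1 (2,True)" using h1[of "(0,False)" "(2,True)" 1] by auto
    have e9: "\<not> X 1 (0,False) \<or> \<not> X 1 (3,False)" using h1[of "(0,False)" "(3,False)" 1] by auto
    have e10: "\<not> X 1 (0,False) \<or> \<not> X 1 (3,True)" using h1[of "(0,False)" "(3,True)" 1] by auto
    have e11: "\<not> X 1 (0,True) \<or> \<not> X 1 (2,False)" using h1[of "(0,True)" "(2,False)" 1] by auto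
    have e12: "\<not> X 1 (0,True) \<or> \<not> X 1 (2,True)" using h1[of "(0,True)" "(2,True)" 1] by auto
    have e13: "\<not> X 1 (0,True) \<or> \<not> X 1 (3,False)" using h1[of "(0,True)" "(3,False)" 1] by auto
    have e14: "\<not> X 1 (0,True) \<or> \<not> X 1 (3,True)" using h1[of "(0,True)" "(3,True)" 1] by auto
    have e15: "\<not> X 1 (2,False) \<or> \<not> X 1 (2,True)" using h1[of "(2,False)" "(2,True)" 1] by auto
    have e16: "\<not> X 1 (2,False) \<or> \<not> X 1 (3,False)" using h1[of "(2,False)" "(3,False)" 1] by auto
    have e17: "\<not> X 1 (2,False) \<or> \<not> X 1 (3,True)" using h1[of "(2,False)" "(3,True)" 1] by auto
    have e18: "\<not> X 1 (2,True) \<or> \<not> X 1 (3,False)" using h1[of "(2,True)" "(3,False)" 1] by auto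
    have e19: "\<not> X 1 (2,True) \<or> \<not> X 1 (3,True)" using h1[of "(2,True)" "(3,True)" 1] by auto
    have e20: "\<not> X 1 (3,False) \<or> \<not> X 1 (3,True)" using h1[of "(3,False)" "(3,True)" 1] by auto
    have e21: "\<not> X 2 (0,False) \<or> \<not> X 2 (0,True)" using h1[of "(0,False)" "(0,True)" 2] by auto
    have e22: "\<not> X 2 (0,False) \<or> \<not> X 2 (1,False)" using h1[of "(0,False)" "(1,False)" 2] by auto
    have e23: "\<not> X 2 (0,False) \<or> \<not> X 2 (1,True)" using h1[of "(0,False)" "(1,True)" 2] by auto
    have e24: "\<not> X 2 (0,False) \<or> \<not> X 2 (2,False)" using h1[of "(0,False)" "(2,False)" 2] by auto
    have e25: "\<not> X 2 (0,False) \<or> \<not> X 2 (2,True)" using h1[of "(0,False)" "(2,True)" 2] by auto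
    have e26: "\<not> X 2 (0,True) \<or> \<not> X 2 (1,False)" using h1[of "(0,True)" "(1,False)" 2] by auto
    have e27: "\<not> X 2 (0,True) \<or> \<not> X 2 (1,True)" using h1[of "(0,True)" "(1,True)" 2] by auto
    have e28: "\<not> X 2 (0,True) \<or> \<not> X 2 (2,False)" using h1[of "(0,True)" "(2,False)" 2] by auto
    have e29: "\<not> X 2 (0,True) \<or> \<not> X 2 (2,True)" using h1[of "(0,True)" "(2,True)" 2] by auto
    have e30: "\<not> X 2 (1,False) \<or> \<not> X 2 (1,True)" using h1[of "(1,False)" "(1,True)" 2] by auto
    have e31: "\<not> X 2 (1,False) \<or> \<not> X 2 (2,False)" using h1[of "(1,False)" "(2,False)" 2] by auto
    have e32: "\<not> X 2 (1,False) \<or> \<not> X 2 (2,True)" using h1[of "(1,False)" "(2,True)" 2] by auto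
    have e33: "\<not> X 2 (1,True) \<or> \<not> X 2 (2,False)" using h1[of "(1,True)" "(2,False)" 2] by auto
    have e34: "\<not> X 2 (1,True) \<or> \<not> X 2 (2,True)" using h1[of "(1,True)" "(2,True)" 2] by auto
    have e35: "\<not> X 2 (2,False) \<or> \<not> X 2 (2,True)" using h1[of "(2,False)" "(2,True)" 2] by auto
    have e36: "\<not> X 3 (1,False) \<or> \<not> X 3 (1,True)" using h1[of "(1,False)" "(1,True)" 3] by auto
    have e37: "\<not> X 3 (1,False) \<or> \<not> X 3 (2,False)" using h1[of "(1,False)" "(2,False)" 3] by auto
    have e38: "\<not> X 3 (1,False) \<or> \<not> X 3 (2,True)" using h1[of "(1,False)" "(2,True)" 3] by auto
    have e39: "\<not> X 3 (1,True) \<or> \<not> X 3 (2,False)" using h1[of "(1,True)" "(2,False)" 3] by auto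
    have e40: "\<not> X 3 (1,True) \<or> \<not> X 3 (2,True)" using h1[of "(1,True)" "(2,True)" 3] by auto
    have e41: "\<not> X 3 (2,False) \<or> \<not> X 3 (2,True)" using h1[of "(2,False)" "(2,True)" 3] by auto
    have e42: "\<not> X 4 (0,False) \<or> \<not> X 4 (0,True)" using h1[of "(0,False)" "(0,True)" 4] by auto
    have e43: "\<not> X 4 (0,False) \<or> \<not> X 4 (1,False)" using h1[of "(0,False)" "(1,False)" 4] by auto
    have e44: "\<not> X 4 (0,False) \<or> \<not> X 4 (1,True)" using h1[of "(0,False)" "(1,True)" 4] by auto
    have e45: "\<not> X 4 (0,False) \<or> \<not> X 4 (2,False)" using h1[of "(0,False)" "(2,False)" 4] by auto
    have e46: "\<not> X 4 (0,False) \<or> \<not> X 4 (2,True)" using h1[of "(0,False)" "(2,True)" 4] by auto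
    have e47: "\<not> X 4 (0,False) \<or> \<not> X 4 (3,False)" using h1[of "(0,False)" "(3,False)" 4] by auto
    have e48: "\<not> X 4 (0,False) \<or> \<not> X 4 (3,True)" using h1[of "(0,False)" "(3,True)" 4] by auto
    have e49: "\<not> X 4 (0,True) \<or> \<not> X 4 (1,False)" using h1[of "(0,True)" "(1,False)" 4] by auto
    have e50: "\<not> X 4 (0,True) \<or> \<not> X 4 (1,True)" using h1[of "(0,True)" "(1,True)" 4] by auto
    have e51: "\<not> X 4 (0,True) \<or> \<not> X 4 (2,False)" using h1[of "(0,True)" "(2,False)" 4] by auto
    have e52: "\<not> X 4 (0,True) \<or> \<not> X 4 (2,True)" using h1[of "(0,True)" "(2,True)" 4] by auto
    have e53: "\<not> X 4 (0,True) \<or> \<not> X 4 (3,False)" using h1[of "(0,True)" "(3,False)" 4] by auto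
    have e54: "\<not> X 4 (0,True) \<or> \<not> X 4 (3,True)" using h1[of "(0,True)" "(3,True)" 4] by auto
    have e55: "\<not> X 4 (1,False) \<or> \<not> X 4 (1,True)" using h1[of "(1,False)" "(1,True)" 4] by auto
    have e56: "\<not> X 4 (1,False) \<or> \<not> X 4 (2,False)" using h1[of "(1,False)" "(2,False)" 4] by auto
    have e57: "\<not> X 4 (1,False) \<or> \<not> X 4 (2,True)" using h1[of "(1,False)" "(2,True)" 4] by auto
    have e58: "\<not> X 4 (1,False) \<or> \<not> X 4 (3,False)" using h1[of "(1,False)" "(3,False)" 4] by auto
    have e59: "\<not> X 4 (1,False) \<or> \<not> X 4 (3,True)" using h1[of "(1,False)" "(3,True)" 4] by auto
    have e60: "\<not> X 4 (1,True) \<or> \<not> X 4 (2,False)" using h1[of "(1,True)" "(2,False)" 4] by auto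
    have e61: "\<not> X 4 (1,True) \<or> \<not> X 4 (2,True)" using h1[of "(1,True)" "(2,True)" 4] by auto
    have e62: "\<not> X 4 (1,True) \<or> \<not> X 4 (3,False)" using h1[of "(1,True)" "(3,False)" 4] by auto
    have e63: "\<not> X 4 (1,True) \<or> \<not> X 4 (3,True)" using h1[of "(1,True)" "(3,True)" 4] by auto
    have e64: "\<not> X 4 (2,False) \<or> \<not> X 4 (2,True)" using h1[of "(2,False)" "(2,True)" 4] by auto
    have e65: "\<not> X 4 (2,False) \<or> \<not> X 4 (3,False)" using h1[of "(2,False)" "(3,False)" 4] by auto
    have e66: "\<not> X 4 (2,False) \<or> \<not> X 4 (3,True)" using h1[of "(2,False)" "(3,True)" 4] by auto
    have e67: "\<not> X 4 (2,True) \<or> \<not> X 4 (3,False)" using h1[of "(2,True)" "(3,False)" 4] by auto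
    have e68: "\<not> X 4 (2,True) \<or> \<not> X 4 (3,True)" using h1[of "(2,True)" "(3,True)" 4] by auto
    have e69: "\<not> X 4 (3,False) \<or> \<not> X 4 (3,True)" using h1[of "(3,False)" "(3,True)" 4] by auto
    show False using c0 c1 c2 c3 c4 c5 c6 c7 c8 c9 e0 e1 e2 e3 e4 e5 e6 e7 e8 e9 e10 e11 e12 e13 e14 e15 e16 e17 e18 e19 e20 e21 e22 e23 e24 e25 e26 e27 e28 e29 e30 e31 e32 e33 e34 e35 e36 e37 e38 e39 e40 e41 e42 e43 e44 e45 e46 e47 e48 e49 e50 e51 e52 e53 e54 e55 e56 e57 e58 e59 e60 e61 e62 e63 e64 e65 e66 e67 e68 e69 by sat
  qed
  then show ?thesis by (intro exI[of _ "vecof 5 ` set Lex510"]) (simp add: Lex510_def)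
qed


definition Lex69 :: "(nat \<times> bool) list list" where
  "Lex69 = [[(3,True),(0,True),(1,False),(1,True),(3,False),(4,True)],[(3,False),(3,True),(2,True),(2,True),(3,False),(3,True)],[(1,False),(0,True),(4,True),(1,False),(3,True),(4,True)],[(0,True),(3,False),(4,False),(1,False),(0,False),(2,False)],[(0,False),(1,False),(3,False),(2,False),(2,True),(4,False)],[(2,False),(4,False),(3,True),(1,True),(3,True),(3,True)],[(1,True),(1,True),(1,True),(0,True),(0,True),(3,False)],[(2,True),(0,False),(2,False),(0,False),(2,False),(2,True)],[(1,False),(4,True),(2,True),(1,True),(3,True),(4,True)]]"

lemma ex69: "\<exists>S. is_UPB 6 S \<and> card S = 9"
proof -
  have "is_UPB 6 (vecof 6 ` set Lex69) \<and> card (vecof 6 ` set Lex69) = length Lex69"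
  proof (rule upb_gen)
    show "\<forall>s\<in>set Lex69. length s = 6 \<and> (\<forall>l\<in>set s. fst l < 5)" by (simp add: Lex69_def)
    show "distinct Lex69" by (simp add: Lex69_def)
    show "\<forall>a\<in>set Lex69. \<forall>b\<in>set Lex69. a \<noteq> b \<longrightarrow> lorth a b" by (simp add: lorth_def Lex69_def)
  next
    fix X assume h1: "\<And>j l l'. l \<noteq> l' \<Longrightarrow> X j l \<Longrightarrow> X j l' \<Longrightarrow> False"
      and h2: "\<And>s. s \<in> set Lex69 \<Longrightarrow> \<exists>j<6. X j (s!j)"
    have c0: "X 0 (3,True) \<or> X 1 (0,True) \<or> X 2 (1,False) \<or> X 3 (1,True) \<or> X 4 (3,False) \<or> X 5 (4,True)" using h2[of "[(3,True),(0,True),(1,False),(1,True),(3,False),(4,True)]"] by (simp add: ex_lt6 Lex69_def)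
    have c1: "X 0 (3,False) \<or> X 1 (3,True) \<or> X 2 (2,True) \<or> X 3 (2,True) \<or> X 4 (3,False) \<or> X 5 (3,True)" using h2[of "[(3,False),(3,True),(2,True),(2,True),(3,False),(3,True)]"] by (simp add: ex_lt6 Lex69_def)
    have c2: "X 0 (1,False) \<or> X 1 (0,True) \<or> X 2 (4,True) \<or> X 3 (1,False) \<or> X 4 (3,True) \<or> X 5 (4,True)" using h2[of "[(1,False),(0,True),(4,True),(1,False),(3,True),(4,True)]"] by (simp add: ex_lt6 Lex69_def)
    have c3: "X 0 (0,True) \<or> X 1 (3,False) \<or> X 2 (4,False) \<or> X 3 (1,False) \<or> X 4 (0,False) \<or> X 5 (2,False)" using h2[of "[(0,True),(3,False),(4,False),(1,False),(0,False),(2,False)]"] by (simp add: ex_lt6 Lex69_def)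
    have c4: "X 0 (0,False) \<or> X 1 (1,False) \<or> X 2 (3,False) \<or> X 3 (2,False) \<or> X 4 (2,True) \<or> X 5 (4,False)" using h2[of "[(0,False),(1,False),(3,False),(2,False),(2,True),(4,False)]"] by (simp add: ex_lt6 Lex69_def)
    have c5: "X 0 (2,False) \<or> X 1 (4,False) \<or> X 2 (3,True) \<or> X 3 (1,True) \<or> X 4 (3,True) \<or> X 5 (3,True)" using h2[of "[(2,False),(4,False),(3,True),(1,True),(3,True),(3,True)]"] by (simp add: ex_lt6 Lex69_def)
    have c6: "X 0 (1,True) \<or> X 1 (1,True) \<or> X 2 (1,True) \<or> X 3 (0,True) \<or> X 4 (0,True) \<or> X 5 (3,False)" using h2[of "[(1,True),(1,True),(1,True),(0,True),(0,True),(3,False)]"] by (simp add: ex_lt6 Lex69_def)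
    have c7: "X 0 (2,True) \<or> X 1 (0,False) \<or> X 2 (2,False) \<or> X 3 (0,False) \<or> X 4 (2,False) \<or> X 5 (2,True)" using h2[of "[(2,True),(0,False),(2,False),(0,False),(2,False),(2,True)]"] by (simp add: ex_lt6 Lex69_def)
    have c8: "X 0 (1,False) \<or> X 1 (4,True) \<or> X 2 (2,True) \<or> X 3 (1,True) \<or> X 4 (3,True) \<or> X 5 (4,True)" using h2[of "[(1,False),(4,True),(2,True),(1,True),(3,True),(4,True)]"] by (simp add: ex_lt6 Lex69_def)
    have e0: "\<not> X 0 (0,False) \<or> \<not> X 0 (0,True)" using h1[of "(0,False)" "(0,True)" 0] by auto
    have e1: "\<not> X 0 (0,False) \<or> \<not> X 0 (1,False)" using h1[of "(0,False)" "(1,False)" 0] by auto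
    have e2: "\<not> X 0 (0,False) \<or> \<not> X 0 (1,True)" using h1[of "(0,False)" "(1,True)" 0] by auto
    have e3: "\<not> X 0 (0,False) \<or> \<not> X 0 (2,False)" using h1[of "(0,False)" "(2,False)" 0] by auto
    have e4: "\<not> X 0 (0,False) \<or> \<not> X 0 (2,True)" using h1[of "(0,False)" "(2,True)" 0] by auto
    have e5: "\<not> X 0 (0,False) \<or> \<not> X 0 (3,False)" using h1[of "(0,False)" "(3,False)" 0] by auto
    have e6: "\<not> X 0 (0,False) \<or> \<not> X 0 (3,True)" using h1[of "(0,False)" "(3,True)" 0] by auto
    have e7: "\<not> X 0 (0,True) \<or> \<not> X 0 (1,False)" using h1[of "(0,True)" "(1,False)" 0] by auto
    have e8: "\<not> X 0 (0,True) \<or> \<not> X 0 (1,True)" using h1[of "(0,True)" "(1,True)" 0] by auto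
    have e9: "\<not> X 0 (0,True) \<or> \<not> X 0 (2,False)" using h1[of "(0,True)" "(2,False)" 0] by auto
    have e10: "\<not> X 0 (0,True) \<or> \<not> X 0 (2,True)" using h1[of "(0,True)" "(2,True)" 0] by auto
    have e11: "\<not> X 0 (0,True) \<or> \<not> X 0 (3,False)" using h1[of "(0,True)" "(3,False)" 0] by auto
    have e12: "\<not> X 0 (0,True) \<or> \<not> X 0 (3,True)" using h1[of "(0,True)" "(3,True)" 0] by auto
    have e13: "\<not> X 0 (1,False) \<or> \<not> X 0 (1,True)" using h1[of "(1,False)" "(1,True)" 0] by auto
    have e14: "\<not> X 0 (1,False) \<or> \<not> X 0 (2,False)" using h1[of "(1,False)" "(2,False)" 0] by auto
    have e15: "\<not> X 0 (1,False) \<or> \<not> X 0 (2,True)" using h1[of "(1,False)" "(2,True)" 0] by auto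
    have e16: "\<not> X 0 (1,False) \<or> \<not> X 0 (3,False)" using h1[of "(1,False)" "(3,False)" 0] by auto
    have e17: "\<not> X 0 (1,False) \<or> \<not> X 0 (3,True)" using h1[of "(1,False)" "(3,True)" 0] by auto
    have e18: "\<not> X 0 (1,True) \<or> \<not> X 0 (2,False)" using h1[of "(1,True)" "(2,False)" 0] by auto
    have e19: "\<not> X 0 (1,True) \<or> \<not> X 0 (2,True)" using h1[of "(1,True)" "(2,True)" 0] by auto
    have e20: "\<not> X 0 (1,True) \<or> \<not> X 0 (3,False)" using h1[of "(1,True)" "(3,False)" 0] by auto
    have e21: "\<not> X 0 (1,True) \<or> \<not> X 0 (3,True)" using h1[of "(1,True)" "(3,True)" 0] by auto
    have e22: "\<not> X 0 (2,False) \<or> \<not> X 0 (2,True)" using h1[of "(2,False)" "(2,True)" 0] by auto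
    have e23: "\<not> X 0 (2,False) \<or> \<not> X 0 (3,False)" using h1[of "(2,False)" "(3,False)" 0] by auto
    have e24: "\<not> X 0 (2,False) \<or> \<not> X 0 (3,True)" using h1[of "(2,False)" "(3,True)" 0] by auto
    have e25: "\<not> X 0 (2,True) \<or> \<not> X 0 (3,False)" using h1[of "(2,True)" "(3,False)" 0] by auto
    have e26: "\<not> X 0 (2,True) \<or> \<not> X 0 (3,True)" using h1[of "(2,True)" "(3,True)" 0] by auto
    have e27: "\<not> X 0 (3,False) \<or> \<not> X 0 (3,True)" using h1[of "(3,False)" "(3,True)" 0] by auto
    have e28: "\<not> X 1 (0,False) \<or> \<not> X 1 (0,True)" using h1[of "(0,False)" "(0,True)" 1] by auto
    have e29: "\<not> X 1 (0,False) \<or> \<not> X 1 (1,False)" using h1[of "(0,False)" "(1,False)" 1] by auto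
    have e30: "\<not> X 1 (0,False) \<or> \<not> X 1 (1,True)" using h1[of "(0,False)" "(1,True)" 1] by auto
    have e31: "\<not> X 1 (0,False) \<or> \<not> X 1 (3,False)" using h1[of "(0,False)" "(3,False)" 1] by auto
    have e32: "\<not> X 1 (0,False) \<or> \<not> X 1 (3,True)" using h1[of "(0,False)" "(3,True)" 1] by auto
    have e33: "\<not> X 1 (0,False) \<or> \<not> X 1 (4,False)" using h1[of "(0,False)" "(4,False)" 1] by auto
    have e34: "\<not> X 1 (0,False) \<or> \<not> X 1 (4,True)" using h1[of "(0,False)" "(4,True)" 1] by auto
    have e35: "\<not> X 1 (0,True) \<or> \<not> X 1 (1,False)" using h1[of "(0,True)" "(1,False)" 1] by auto
    have e36: "\<not> X 1 (0,True) \<or> \<not> X 1 (1,True)" using h1[of "(0,True)" "(1,True)" 1] by auto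
    have e37: "\<not> X 1 (0,True) \<or> \<not> X 1 (3,False)" using h1[of "(0,True)" "(3,False)" 1] by auto
    have e38: "\<not> X 1 (0,True) \<or> \<not> X 1 (3,True)" using h1[of "(0,True)" "(3,True)" 1] by auto
    have e39: "\<not> X 1 (0,True) \<or> \<not> X 1 (4,False)" using h1[of "(0,True)" "(4,False)" 1] by auto
    have e40: "\<not> X 1 (0,True) \<or> \<not> X 1 (4,True)" using h1[of "(0,True)" "(4,True)" 1] by auto
    have e41: "\<not> X 1 (1,False) \<or> \<not> X 1 (1,True)" using h1[of "(1,False)" "(1,True)" 1] by auto
    have e42: "\<not> X 1 (1,False) \<or> \<not> X 1 (3,False)" using h1[of "(1,False)" "(3,False)" 1] by auto
    have e43: "\<not> X 1 (1,False) \<or> \<not> X 1 (3,True)" using h1[of "(1,False)" "(3,True)" 1] by auto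
    have e44: "\<not> X 1 (1,False) \<or> \<not> X 1 (4,False)" using h1[of "(1,False)" "(4,False)" 1] by auto
    have e45: "\<not> X 1 (1,False) \<or> \<not> X 1 (4,True)" using h1[of "(1,False)" "(4,True)" 1] by auto
    have e46: "\<not> X 1 (1,True) \<or> \<not> X 1 (3,False)" using h1[of "(1,True)" "(3,False)" 1] by auto
    have e47: "\<not> X 1 (1,True) \<or> \<not> X 1 (3,True)" using h1[of "(1,True)" "(3,True)" 1] by auto
    have e48: "\<not> X 1 (1,True) \<or> \<not> X 1 (4,False)" using h1[of "(1,True)" "(4,False)" 1] by auto
    have e49: "\<not> X 1 (1,True) \<or> \<not> X 1 (4,True)" using h1[of "(1,True)" "(4,True)" 1] by auto
    have e50: "\<not> X 1 (3,False) \<or> \<not> X 1 (3,True)" using h1[of "(3,False)" "(3,True)" 1] by auto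
    have e51: "\<not> X 1 (3,False) \<or> \<not> X 1 (4,False)" using h1[of "(3,False)" "(4,False)" 1] by auto
    have e52: "\<not> X 1 (3,False) \<or> \<not> X 1 (4,True)" using h1[of "(3,False)" "(4,True)" 1] by auto
    have e53: "\<not> X 1 (3,True) \<or> \<not> X 1 (4,False)" using h1[of "(3,True)" "(4,False)" 1] by auto
    have e54: "\<not> X 1 (3,True) \<or> \<not> X 1 (4,True)" using h1[of "(3,True)" "(4,True)" 1] by auto
    have e55: "\<not> X 1 (4,False) \<or> \<not> X 1 (4,True)" using h1[of "(4,False)" "(4,True)" 1] by auto
    have e56: "\<not> X 2 (1,False) \<or> \<not> X 2 (1,True)" using h1[of "(1,False)" "(1,True)" 2] by auto
    have e57: "\<not> X 2 (1,False) \<or> \<not> X 2 (2,False)" using h1[of "(1,False)" "(2,False)" 2] by auto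
    have e58: "\<not> X 2 (1,False) \<or> \<not> X 2 (2,True)" using h1[of "(1,False)" "(2,True)" 2] by auto
    have e59: "\<not> X 2 (1,False) \<or> \<not> X 2 (3,False)" using h1[of "(1,False)" "(3,False)" 2] by auto
    have e60: "\<not> X 2 (1,False) \<or> \<not> X 2 (3,True)" using h1[of "(1,False)" "(3,True)" 2] by auto
    have e61: "\<not> X 2 (1,False) \<or> \<not> X 2 (4,False)" using h1[of "(1,False)" "(4,False)" 2] by auto
    have e62: "\<not> X 2 (1,False) \<or> \<not> X 2 (4,True)" using h1[of "(1,False)" "(4,True)" 2] by auto
    have e63: "\<not> X 2 (1,True) \<or> \<not> X 2 (2,False)" using h1[of "(1,True)" "(2,False)" 2] by auto
    have e64: "\<not> X 2 (1,True) \<or> \<not> X 2 (2,True)" using h1[of "(1,True)" "(2,True)" 2] by auto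
    have e65: "\<not> X 2 (1,True) \<or> \<not> X 2 (3,False)" using h1[of "(1,True)" "(3,False)" 2] by auto
    have e66: "\<not> X 2 (1,True) \<or> \<not> X 2 (3,True)" using h1[of "(1,True)" "(3,True)" 2] by auto
    have e67: "\<not> X 2 (1,True) \<or> \<not> X 2 (4,False)" using h1[of "(1,True)" "(4,False)" 2] by auto
    have e68: "\<not> X 2 (1,True) \<or> \<not> X 2 (4,True)" using h1[of "(1,True)" "(4,True)" 2] by auto
    have e69: "\<not> X 2 (2,False) \<or> \<not> X 2 (2,True)" using h1[of "(2,False)" "(2,True)" 2] by auto
    have e70: "\<not> X 2 (2,False) \<or> \<not> X 2 (3,False)" using h1[of "(2,False)" "(3,False)" 2] by auto
    have e71: "\<not> X 2 (2,False) \<or> \<not> X 2 (3,True)" using h1[of "(2,False)" "(3,True)" 2] by auto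
    have e72: "\<not> X 2 (2,False) \<or> \<not> X 2 (4,False)" using h1[of "(2,False)" "(4,False)" 2] by auto
    have e73: "\<not> X 2 (2,False) \<or> \<not> X 2 (4,True)" using h1[of "(2,False)" "(4,True)" 2] by auto
    have e74: "\<not> X 2 (2,True) \<or> \<not> X 2 (3,False)" using h1[of "(2,True)" "(3,False)" 2] by auto
    have e75: "\<not> X 2 (2,True) \<or> \<not> X 2 (3,True)" using h1[of "(2,True)" "(3,True)" 2] by auto
    have e76: "\<not> X 2 (2,True) \<or> \<not> X 2 (4,False)" using h1[of "(2,True)" "(4,False)" 2] by auto
    have e77: "\<not> X 2 (2,True) \<or> \<not> X 2 (4,True)" using h1[of "(2,True)" "(4,True)" 2] by auto
    have e78: "\<not> X 2 (3,False) \<or> \<not> X 2 (3,True)" using h1[of "(3,False)" "(3,True)" 2] by auto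
    have e79: "\<not> X 2 (3,False) \<or> \<not> X 2 (4,False)" using h1[of "(3,False)" "(4,False)" 2] by auto
    have e80: "\<not> X 2 (3,False) \<or> \<not> X 2 (4,True)" using h1[of "(3,False)" "(4,True)" 2] by auto
    have e81: "\<not> X 2 (3,True) \<or> \<not> X 2 (4,False)" using h1[of "(3,True)" "(4,False)" 2] by auto
    have e82: "\<not> X 2 (3,True) \<or> \<not> X 2 (4,True)" using h1[of "(3,True)" "(4,True)" 2] by auto
    have e83: "\<not> X 2 (4,False) \<or> \<not> X 2 (4,True)" using h1[of "(4,False)" "(4,True)" 2] by auto
    have e84: "\<not> X 3 (0,False) \<or> \<not> X 3 (0,True)" using h1[of "(0,False)" "(0,True)" 3] by auto
    have e85: "\<not> X 3 (0,False) \<or> \<not> X 3 (1,False)" using h1[of "(0,False)" "(1,False)" 3] by auto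
    have e86: "\<not> X 3 (0,False) \<or> \<not> X 3 (1,True)" using h1[of "(0,False)" "(1,True)" 3] by auto
    have e87: "\<not> X 3 (0,False) \<or> \<not> X 3 (2,False)" using h1[of "(0,False)" "(2,False)" 3] by auto
    have e88: "\<not> X 3 (0,False) \<or> \<not> X 3 (2,True)" using h1[of "(0,False)" "(2,True)" 3] by auto
    have e89: "\<not> X 3 (0,True) \<or> \<not> X 3 (1,False)" using h1[of "(0,True)" "(1,False)" 3] by auto
    have e90: "\<not> X 3 (0,True) \<or> \<not> X 3 (1,True)" using h1[of "(0,True)" "(1,True)" 3] by auto
    have e91: "\<not> X 3 (0,True) \<or> \<not> X 3 (2,False)" using h1[of "(0,True)" "(2,False)" 3] by auto
    have e92: "\<not> X 3 (0,True) \<or> \<not> X 3 (2,True)" using h1[of "(0,True)" "(2,True)" 3] by auto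
    have e93: "\<not> X 3 (1,False) \<or> \<not> X 3 (1,True)" using h1[of "(1,False)" "(1,True)" 3] by auto
    have e94: "\<not> X 3 (1,False) \<or> \<not> X 3 (2,False)" using h1[of "(1,False)" "(2,False)" 3] by auto
    have e95: "\<not> X 3 (1,False) \<or> \<not> X 3 (2,True)" using h1[of "(1,False)" "(2,True)" 3] by auto
    have e96: "\<not> X 3 (1,True) \<or> \<not> X 3 (2,False)" using h1[of "(1,True)" "(2,False)" 3] by auto
    have e97: "\<not> X 3 (1,True) \<or> \<not> X 3 (2,True)" using h1[of "(1,True)" "(2,True)" 3] by auto
    have e98: "\<not> X 3 (2,False) \<or> \<not> X 3 (2,True)" using h1[of "(2,False)" "(2,True)" 3] by auto
    have e99: "\<not> X 4 (0,False) \<or> \<not> X 4 (0,True)" using h1[of "(0,False)" "(0,True)" 4] by auto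
    have e100: "\<not> X 4 (0,False) \<or> \<not> X 4 (2,False)" using h1[of "(0,False)" "(2,False)" 4] by auto
    have e101: "\<not> X 4 (0,False) \<or> \<not> X 4 (2,True)" using h1[of "(0,False)" "(2,True)" 4] by auto
    have e102: "\<not> X 4 (0,False) \<or> \<not> X 4 (3,False)" using h1[of "(0,False)" "(3,False)" 4] by auto
    have e103: "\<not> X 4 (0,False) \<or> \<not> X 4 (3,True)" using h1[of "(0,False)" "(3,True)" 4] by auto
    have e104: "\<not> X 4 (0,True) \<or> \<not> X 4 (2,False)" using h1[of "(0,True)" "(2,False)" 4] by auto
    have e105: "\<not> X 4 (0,True) \<or> \<not> X 4 (2,True)" using h1[of "(0,True)" "(2,True)" 4] by auto
    have e106: "\<not> X 4 (0,True) \<or> \<not> X 4 (3,False)" using h1[of "(0,True)" "(3,False)" 4] by auto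
    have e107: "\<not> X 4 (0,True) \<or> \<not> X 4 (3,True)" using h1[of "(0,True)" "(3,True)" 4] by auto
    have e108: "\<not> X 4 (2,False) \<or> \<not> X 4 (2,True)" using h1[of "(2,False)" "(2,True)" 4] by auto
    have e109: "\<not> X 4 (2,False) \<or> \<not> X 4 (3,False)" using h1[of "(2,False)" "(3,False)" 4] by auto
    have e110: "\<not> X 4 (2,False) \<or> \<not> X 4 (3,True)" using h1[of "(2,False)" "(3,True)" 4] by auto
    have e111: "\<not> X 4 (2,True) \<or> \<not> X 4 (3,False)" using h1[of "(2,True)" "(3,False)" 4] by auto
    have e112: "\<not> X 4 (2,True) \<or> \<not> X 4 (3,True)" using h1[of "(2,True)" "(3,True)" 4] by auto
    have e113: "\<not> X 4 (3,False) \<or> \<not> X 4 (3,True)" using h1[of "(3,False)" "(3,True)" 4] by auto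
    have e114: "\<not> X 5 (2,False) \<or> \<not> X 5 (2,True)" using h1[of "(2,False)" "(2,True)" 5] by auto
    have e115: "\<not> X 5 (2,False) \<or> \<not> X 5 (3,False)" using h1[of "(2,False)" "(3,False)" 5] by auto
    have e116: "\<not> X 5 (2,False) \<or> \<not> X 5 (3,True)" using h1[of "(2,False)" "(3,True)" 5] by auto
    have e117: "\<not> X 5 (2,False) \<or> \<not> X 5 (4,False)" using h1[of "(2,False)" "(4,False)" 5] by auto
    have e118: "\<not> X 5 (2,False) \<or> \<not> X 5 (4,True)" using h1[of "(2,False)" "(4,True)" 5] by auto
    have e119: "\<not> X 5 (2,True) \<or> \<not> X 5 (3,False)" using h1[of "(2,True)" "(3,False)" 5] by auto
    have e120: "\<not> X 5 (2,True) \<or> \<not> X 5 (3,True)" using h1[of "(2,True)" "(3,True)" 5] by auto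
    have e121: "\<not> X 5 (2,True) \<or> \<not> X 5 (4,False)" using h1[of "(2,True)" "(4,False)" 5] by auto
    have e122: "\<not> X 5 (2,True) \<or> \<not> X 5 (4,True)" using h1[of "(2,True)" "(4,True)" 5] by auto
    have e123: "\<not> X 5 (3,False) \<or> \<not> X 5 (3,True)" using h1[of "(3,False)" "(3,True)" 5] by auto
    have e124: "\<not> X 5 (3,False) \<or> \<not> X 5 (4,False)" using h1[of "(3,False)" "(4,False)" 5] by auto
    have e125: "\<not> X 5 (3,False) \<or> \<not> X 5 (4,True)" using h1[of "(3,False)" "(4,True)" 5] by auto
    have e126: "\<not> X 5 (3,True) \<or> \<not> X 5 (4,False)" using h1[of "(3,True)" "(4,False)" 5] by auto
    have e127: "\<not> X 5 (3,True) \<or> \<not> X 5 (4,True)" using h1[of "(3,True)" "(4,True)" 5] by auto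
    have e128: "\<not> X 5 (4,False) \<or> \<not> X 5 (4,True)" using h1[of "(4,False)" "(4,True)" 5] by auto
    show False using c0 c1 c2 c3 c4 c5 c6 c7 c8 e0 e1 e2 e3 e4 e5 e6 e7 e8 e9 e10 e11 e12 e13 e14 e15 e16 e17 e18 e19 e20 e21 e22 e23 e24 e25 e26 e27 e28 e29 e30 e31 e32 e33 e34 e35 e36 e37 e38 e39 e40 e41 e42 e43 e44 e45 e46 e47 e48 e49 e50 e51 e52 e53 e54 e55 e56 e57 e58 e59 e60 e61 e62 e63 e64 e65 e66 e67 e68 e69 e70 e71 e72 e73 e74 e75 e76 e77 e78 e79 e80 e81 e82 e83 e84 e85 e86 e87 e88 e89 e90 e91 e92 e93 e94 e95 e96 e97 e98 e99 e100 e101 e102 e103 e104 e105 e106 e107 e108 e109 e110 e111 e112 e113 e114 e115 e116 e117 e118 e119 e120 e121 e122 e123 e124 e125 e126 e127 e128 by sat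
  qed
  then show ?thesis by (intro exI[of _ "vecof 6 ` set Lex69"]) (simp add: Lex69_def)
qed


theorem mainTheorem12:
  shows "(\<exists>S. is_UPB 5 S \<and> card S = 8) \<and> (\<exists>S. is_UPB 5 S \<and> card S = 9) \<and>
         (\<exists>S. is_UPB 5 S \<and> card S = 10) \<and> (\<exists>S. is_UPB 6 S \<and> card S = 9)"
  using ex58 ex59 ex510 ex69 by blast

end
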